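(* Let $\mathcal{C}$ be a strongly connected category with all small products and let $\mathcal{D}$ be an essentially small category. Then any functor $\mathcal{C}\to\mathcal{D}$ is isomorphic to a constant functor.
   Context: A category is strongly connected if for any two objects $c,c'$ the hom-set $\mathcal{C}(c,c')$ is non-empty. A category is essentially small if it is equivalent to a small category. *)

theory Defs
  imports Main
begin

text \<open>Categories given by explicit object/arrow carriers. Comp C g f is g after f.\<close>

record ('o,'a) category =
  Obj  :: "'o set"
  Arr  :: "'a set"
  Dom  :: "'a \<Rightarrow> 'o"
  Cod  :: "'a \<Rightarrow> 'o"
  Id   :: "'o \<Rightarrow> 'a"
  Comp :: "'a \<Rightarrow> 'a \<Rightarrow> 'a"

definition hom :: "('o,'a) category \<Rightarrow> 'o \<Rightarrow> 'o \<Rightarrow> 'a set" where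
  "hom C x y = {f \<in> Arr C. Dom C f = x \<and> Cod C f = y}"

definition is_category :: "('o,'a) category \<Rightarrow> bool" where
  "is_category C \<longleftrightarrow>
     (\<forall>f\<in>Arr C. Dom C f \<in> Obj C \<and> Cod C f \<in> Obj C) \<and>
     (\<forall>x\<in>Obj C. Id C x \<in> hom C x x) \<and>
     (\<forall>x y z f g. f \<in> hom C x y \<longrightarrow> g \<in> hom C y z \<longrightarrow> Comp C g f \<in> hom C x z) \<and>
     (\<forall>x y f. f \<in> hom C x y \<longrightarrow> Comp C (Id C y) f = f \<and> Comp C f (Id C x) = f) \<and>
     (\<forall>w x y z f g h. f \<in> hom C w x \<longrightarrow> g \<in> hom C x y \<longrightarrow> h \<in> hom C y z \<longrightarrow>
         Comp C h (Comp C g f) = Comp C (Comp C h g) f)"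

definition is_functor ::
  "('o,'a) category \<Rightarrow> ('p,'b) category \<Rightarrow> ('o \<Rightarrow> 'p) \<Rightarrow> ('a \<Rightarrow> 'b) \<Rightarrow> bool" where
  "is_functor C D Fo Fa \<longleftrightarrow>
     (\<forall>x\<in>Obj C. Fo x \<in> Obj D) \<and>
     (\<forall>x y f. f \<in> hom C x y \<longrightarrow> Fa f \<in> hom D (Fo x) (Fo y)) \<and>
     (\<forall>x\<in>Obj C. Fa (Id C x) = Id D (Fo x)) \<and>
     (\<forall>x y z f g. f \<in> hom C x y \<longrightarrow> g \<in> hom C y z \<longrightarrow> Fa (Comp C g f) = Comp D (Fa g) (Fa f))"

definition is_iso :: "('o,'a) category \<Rightarrow> 'a \<Rightarrow> bool" where
  "is_iso C f \<longleftrightarrow> f \<in> Arr C \<and>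
     (\<exists>g \<in> hom C (Cod C f) (Dom C f). Comp C g f = Id C (Dom C f) \<and> Comp C f g = Id C (Cod C f))"

definition nat_iso ::
  "('o,'a) category \<Rightarrow> ('p,'b) category \<Rightarrow> ('o \<Rightarrow> 'p) \<Rightarrow> ('a \<Rightarrow> 'b)
     \<Rightarrow> ('o \<Rightarrow> 'p) \<Rightarrow> ('a \<Rightarrow> 'b) \<Rightarrow> ('o \<Rightarrow> 'b) \<Rightarrow> bool" where
  "nat_iso C D Fo Fa Go Ga \<eta> \<longleftrightarrow>
     (\<forall>c\<in>Obj C. \<eta> c \<in> hom D (Fo c) (Go c) \<and> is_iso D (\<eta> c)) \<and>
     (\<forall>f\<in>Arr C. Comp D (Ga f) (\<eta> (Dom C f)) = Comp D (\<eta> (Cod C f)) (Fa f))"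

definition equivalent_categories :: "('o,'a) category \<Rightarrow> ('p,'b) category \<Rightarrow> bool" where
  "equivalent_categories C D \<longleftrightarrow>
     (\<exists>Fo Fa Go Ga \<eta> \<epsilon>. is_functor C D Fo Fa \<and> is_functor D C Go Ga \<and>
        nat_iso C C id id (Go \<circ> Fo) (Ga \<circ> Fa) \<eta> \<and>
        nat_iso D D (Fo \<circ> Go) (Fa \<circ> Ga) id id \<epsilon>)"

definition strongly_connected :: "('o,'a) category \<Rightarrow> bool" where
  "strongly_connected C \<longleftrightarrow> (\<forall>c\<in>Obj C. \<forall>c'\<in>Obj C. hom C c c' \<noteq> {})"

definition is_product ::
  "('o,'a) category \<Rightarrow> 'i set \<Rightarrow> ('i \<Rightarrow> 'o) \<Rightarrow> 'o \<Rightarrow> ('i \<Rightarrow> 'a) \<Rightarrow> bool" where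
  "is_product C I X P p \<longleftrightarrow> P \<in> Obj C \<and> (\<forall>i\<in>I. p i \<in> hom C P (X i)) \<and>
     (\<forall>Q f. Q \<in> Obj C \<longrightarrow> (\<forall>i\<in>I. f i \<in> hom C Q (X i)) \<longrightarrow>
        (\<exists>!u. u \<in> hom C Q P \<and> (\<forall>i\<in>I. Comp C (p i) u = f i)))"

text \<open>Size conventions: the universe of small sets is modelled by a type 'u;
  a set is small iff it is (indexed by) a subset of 'u.\<close>

definition has_small_products :: "'u itself \<Rightarrow> ('o,'a) category \<Rightarrow> bool" where
  "has_small_products (U :: 'u itself) C \<longleftrightarrow>
     (\<forall>(I :: 'u set) X. (\<forall>i\<in>I. X i \<in> Obj C) \<longrightarrow> (\<exists>P p. is_product C I X P p))"

definition essentially_small :: "'u itself \<Rightarrow> ('o,'a) category \<Rightarrow> bool" where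
  "essentially_small (U :: 'u itself) C \<longleftrightarrow>
     (\<exists>E :: ('u,'u) category. is_category E \<and> equivalent_categories C E)"

end

theory Submission
  imports Defs
begin

lemma cat_obj: "is_category C \<Longrightarrow> f \<in> hom C x y \<Longrightarrow> x \<in> Obj C \<and> y \<in> Obj C"
  unfolding is_category_def hom_def by blast
lemma cat_id: "is_category C \<Longrightarrow> x \<in> Obj C \<Longrightarrow> Id C x \<in> hom C x x"
  unfolding is_category_def by blast
lemma cat_comp: "is_category C \<Longrightarrow> f \<in> hom C x y \<Longrightarrow> g \<in> hom C y z \<Longrightarrow> Comp C g f \<in> hom C x z"
  unfolding is_category_def by blast
lemma cat_idl: "is_category C \<Longrightarrow> f \<in> hom C x y \<Longrightarrow> Comp C (Id C y) f = f"
  unfolding is_category_def by blast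
lemma cat_idr: "is_category C \<Longrightarrow> f \<in> hom C x y \<Longrightarrow> Comp C f (Id C x) = f"
  unfolding is_category_def by blast
lemma cat_assoc: "is_category C \<Longrightarrow> f \<in> hom C w x \<Longrightarrow> g \<in> hom C x y \<Longrightarrow> h \<in> hom C y z \<Longrightarrow>
    Comp C h (Comp C g f) = Comp C (Comp C h g) f"
  unfolding is_category_def by blast
lemma fun_obj: "is_functor C D Fo Fa \<Longrightarrow> x \<in> Obj C \<Longrightarrow> Fo x \<in> Obj D"
  unfolding is_functor_def by blast
lemma fun_hom: "is_functor C D Fo Fa \<Longrightarrow> f \<in> hom C x y \<Longrightarrow> Fa f \<in> hom D (Fo x) (Fo y)"
  unfolding is_functor_def by blast
lemma fun_id: "is_functor C D Fo Fa \<Longrightarrow> x \<in> Obj C \<Longrightarrow> Fa (Id C x) = Id D (Fo x)"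
  unfolding is_functor_def by blast
lemma fun_comp: "is_functor C D Fo Fa \<Longrightarrow> f \<in> hom C x y \<Longrightarrow> g \<in> hom C y z \<Longrightarrow>
    Fa (Comp C g f) = Comp D (Fa g) (Fa f)"
  unfolding is_functor_def by blast

lemma faithful_equiv:
  fixes D :: "('a,'b) category"
  assumes "equivalent_categories D (E :: ('u,'u) category)" "is_category D"
  shows "\<exists>H :: 'b \<Rightarrow> 'u. \<forall>x y f g. f \<in> hom D x y \<longrightarrow> g \<in> hom D x y \<longrightarrow> H f = H g \<longrightarrow> f = g"
proof -
  obtain Fo' :: "'a \<Rightarrow> 'u" and Fa' :: "'b \<Rightarrow> 'u" and Go Ga \<eta> where
    n: "nat_iso D D id id (Go \<circ> Fo') (Ga \<circ> Fa') \<eta>"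
    using assms(1) unfolding equivalent_categories_def by blast
  have "\<forall>x y f g. f \<in> hom D x y \<longrightarrow> g \<in> hom D x y \<longrightarrow> Fa' f = Fa' g \<longrightarrow> f = g"
  proof (intro allI impI)
    fix x y f g
    assume f: "f \<in> hom D x y" and g: "g \<in> hom D x y" and e: "Fa' f = Fa' g"
    have yO: "y \<in> Obj D" using cat_obj[OF assms(2) f] by blast
    have n1: "\<forall>c\<in>Obj D. \<eta> c \<in> hom D c (Go (Fo' c)) \<and> is_iso D (\<eta> c)"
      and n2: "\<forall>f\<in>Arr D. Comp D (Ga (Fa' f)) (\<eta> (Dom D f)) = Comp D (\<eta> (Cod D f)) f"
      using n unfolding nat_iso_def by auto
    have ny: "\<eta> y \<in> hom D y (Go (Fo' y))" "is_iso D (\<eta> y)" using n1 yO by auto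
    have fA: "f \<in> Arr D" "Dom D f = x" "Cod D f = y" using f unfolding hom_def by auto
    have gA: "g \<in> Arr D" "Dom D g = x" "Cod D g = y" using g unfolding hom_def by auto
    have nf: "Comp D (Ga (Fa' f)) (\<eta> x) = Comp D (\<eta> y) f"
      using n2 fA by metis
    have ng: "Comp D (Ga (Fa' g)) (\<eta> x) = Comp D (\<eta> y) g"
      using n2 gA by metis
    have eq: "Comp D (\<eta> y) f = Comp D (\<eta> y) g" using nf ng e by simp
    have "Dom D (\<eta> y) = y" "Cod D (\<eta> y) = Go (Fo' y)" using ny(1) unfolding hom_def by auto
    then obtain h where h: "h \<in> hom D (Go (Fo' y)) y" "Comp D h (\<eta> y) = Id D y"
      using ny(2) unfolding is_iso_def by auto
    have "f = Comp D (Comp D h (\<eta> y)) f" using h(2) cat_idl[OF assms(2) f] by simp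
    also have "\<dots> = Comp D h (Comp D (\<eta> y) f)" using cat_assoc[OF assms(2) f ny(1) h(1)] by simp
    also have "\<dots> = Comp D h (Comp D (\<eta> y) g)" using eq by simp
    also have "\<dots> = Comp D (Comp D h (\<eta> y)) g" using cat_assoc[OF assms(2) g ny(1) h(1)] by simp
    also have "\<dots> = g" using h(2) cat_idl[OF assms(2) g] by simp
    finally show "f = g" .
  qed
  then show ?thesis by blast
qed

lemma no_inj_pow:
  fixes G :: "'u set \<Rightarrow> 'u"
  assumes "inj G"
  shows False
proof -
  define S where "S = {x. \<exists>T. G T = x \<and> x \<notin> T}"
  show False
  proof (cases "G S \<in> S")
    case True
    then obtain T where "G T = G S" "G S \<notin> T" unfolding S_def by blast
    then have "T = S" using assms by (simp add: inj_eq)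
    then show False using True \<open>G S \<notin> T\<close> by simp
  next
    case False
    then show False unfolding S_def by blast
  qed
qed

lemma parallel_eq:
  fixes C :: "('o,'a) category" and D :: "('p,'b) category"
    and Fo :: "'o \<Rightarrow> 'p" and Fa :: "'a \<Rightarrow> 'b"
  assumes "is_category C"
    and "has_small_products TYPE('u) C"
    and "is_category D" and "essentially_small TYPE('u) D"
    and "is_functor C D Fo Fa"
    and f: "f \<in> hom C a b" and g: "g \<in> hom C a b"
  shows "Fa f = Fa g"
proof (rule ccontr)
  assume ne: "Fa f \<noteq> Fa g"
  obtain E :: "('u,'u) category" where E: "equivalent_categories D E"
    using assms(4) unfolding essentially_small_def by blast
  obtain H :: "'b \<Rightarrow> 'u" where H: "\<And>x y f g. f \<in> hom D x y \<Longrightarrow> g \<in> hom D x y \<Longrightarrow> H f = H g \<Longrightarrow> f = g"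
    using faithful_equiv[OF E assms(3)] by blast
  have bO: "b \<in> Obj C" and aO: "a \<in> Obj C" using cat_obj[OF assms(1) f] by auto
  have "\<forall>(I :: 'u set) X. (\<forall>i\<in>I. X i \<in> Obj C) \<longrightarrow> (\<exists>P p. is_product C I X P p)"
    using assms(2) unfolding has_small_products_def by simp
  then have "\<exists>P p. is_product C (UNIV :: 'u set) (\<lambda>_. b) P p"
    using bO by simp
  then obtain P p where pr: "is_product C (UNIV :: 'u set) (\<lambda>_. b) P p"
    by iprover
  have pP: "P \<in> Obj C" and pi: "\<And>i. p i \<in> hom C P b"
    and up: "\<And>Q f. Q \<in> Obj C \<Longrightarrow> (\<forall>i\<in>UNIV. f i \<in> hom C Q b) \<Longrightarrow>
        (\<exists>!u. u \<in> hom C Q P \<and> (\<forall>i\<in>UNIV. Comp C (p i) u = f i))"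
    using pr unfolding is_product_def by simp_all
  have ex: "\<exists>u. u \<in> hom C a P \<and> (\<forall>i. Comp C (p i) u = (if i \<in> S then f else g))" for S
  proof -
    have "\<forall>i\<in>(UNIV::'u set). (if i \<in> S then f else g) \<in> hom C a b" using f g by auto
    from up[OF aO this] show ?thesis by (metis ex1_implies_ex iso_tuple_UNIV_I)
  qed
  define h where "h S = (SOME u. u \<in> hom C a P \<and> (\<forall>i. Comp C (p i) u = (if i \<in> S then f else g)))" for S
  have h: "h S \<in> hom C a P \<and> (\<forall>i. Comp C (p i) (h S) = (if i \<in> S then f else g))" for S
    unfolding h_def using ex[of S] by (rule someI_ex)
  have Fh: "Fa (h S) \<in> hom D (Fo a) (Fo P)" for S using fun_hom[OF assms(5) conjunct1[OF h[of S]]] .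
  have Fc: "Comp D (Fa (p i)) (Fa (h S)) = (if i \<in> S then Fa f else Fa g)" for S i
  proof -
    have "Fa (Comp C (p i) (h S)) = Comp D (Fa (p i)) (Fa (h S))"
      using fun_comp[OF assms(5) conjunct1[OF h[of S]] pi[of i]] .
    moreover have "Comp C (p i) (h S) = (if i \<in> S then f else g)" using h[of S] by simp
    ultimately show ?thesis by (simp split: if_splits)
  qed
  have "inj (\<lambda>S. H (Fa (h S)))"
  proof (rule injI)
    fix S T assume "H (Fa (h S)) = H (Fa (h T))"
    then have e: "Fa (h S) = Fa (h T)" using H[OF Fh Fh] by simp
    show "S = T"
    proof (rule ccontr)
      assume "S \<noteq> T"
      then obtain i where "i \<in> S \<and> i \<notin> T \<or> i \<notin> S \<and> i \<in> T" by blast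
      then show False using Fc[of i S] Fc[of i T] e ne by auto
    qed
  qed
  then show False by (rule no_inj_pow)
qed

theorem corollary2p5:
  fixes C :: "('o,'a) category" and D :: "('p,'b) category"
    and Fo :: "'o \<Rightarrow> 'p" and Fa :: "'a \<Rightarrow> 'b"
  assumes "is_category C" and "strongly_connected C"
    and "has_small_products TYPE('u) C"
    and "is_category D" and "essentially_small TYPE('u) D"
    and "is_functor C D Fo Fa"
  shows "\<exists>d\<in>Obj D. \<exists>\<eta>. nat_iso C D Fo Fa (\<lambda>_. d) (\<lambda>_. Id D d) \<eta>"
proof -
  note par = parallel_eq[OF assms(1,3,4,5,6)]
  have "\<forall>(I :: 'u set) X. (\<forall>i\<in>I. X i \<in> Obj C) \<longrightarrow> (\<exists>P p. is_product C I X P p)"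
    using assms(3) unfolding has_small_products_def by simp
  then obtain c0 p0 where "is_product C ({} :: 'u set) (\<lambda>_. undefined) c0 p0"
    by blast
  then have c0: "c0 \<in> Obj C" unfolding is_product_def by blast
  have sc: "\<And>c c'. c \<in> Obj C \<Longrightarrow> c' \<in> Obj C \<Longrightarrow> \<exists>f. f \<in> hom C c c'"
    using assms(2) unfolding strongly_connected_def by blast
  define k where "k c = (SOME f. f \<in> hom C c c0)" for c
  have k: "k c \<in> hom C c c0" if "c \<in> Obj C" for c
    unfolding k_def using sc[OF that c0] by (rule someI_ex)
  define d where "d = Fo c0"
  have dO: "d \<in> Obj D" using fun_obj[OF assms(6) c0] unfolding d_def .
  have Fk: "Fa (k c) \<in> hom D (Fo c) d" if "c \<in> Obj C" for c
    using fun_hom[OF assms(6) k[OF that]] unfolding d_def .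
  have iso: "is_iso D (Fa (k c))" if cO: "c \<in> Obj C" for c
  proof -
    obtain g where g: "g \<in> hom C c0 c" using sc[OF c0 cO] by blast
    have kc: "k c \<in> hom C c c0" using k cO .
    have Fg: "Fa g \<in> hom D d (Fo c)" using fun_hom[OF assms(6) g] unfolding d_def .
    have c1: "Comp C g (k c) \<in> hom C c c" "Comp C (k c) g \<in> hom C c0 c0"
      using cat_comp[OF assms(1) kc g] cat_comp[OF assms(1) g kc] by auto
    have i1: "Id C c \<in> hom C c c" "Id C c0 \<in> hom C c0 c0" using cat_id[OF assms(1)] cO c0 by auto
    have "Comp D (Fa g) (Fa (k c)) = Fa (Comp C g (k c))" using fun_comp[OF assms(6) kc g] by simp
    also have "\<dots> = Fa (Id C c)" using par[OF c1(1) i1(1)] .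
    also have "\<dots> = Id D (Fo c)" using fun_id[OF assms(6) cO] .
    finally have e1: "Comp D (Fa g) (Fa (k c)) = Id D (Fo c)" .
    have "Comp D (Fa (k c)) (Fa g) = Fa (Comp C (k c) g)" using fun_comp[OF assms(6) g kc] by simp
    also have "\<dots> = Fa (Id C c0)" using par[OF c1(2) i1(2)] .
    also have "\<dots> = Id D d" using fun_id[OF assms(6) c0] unfolding d_def .
    finally have e2: "Comp D (Fa (k c)) (Fa g) = Id D d" .
    have "Fa (k c) \<in> Arr D" "Dom D (Fa (k c)) = Fo c" "Cod D (Fa (k c)) = d"
      using Fk[OF cO] unfolding hom_def by auto
    then show "is_iso D (Fa (k c))" unfolding is_iso_def using Fg e1 e2 by auto
  qed
  have "nat_iso C D Fo Fa (\<lambda>_. d) (\<lambda>_. Id D d) (\<lambda>c. Fa (k c))"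
    unfolding nat_iso_def
  proof (intro conjI ballI)
    fix c assume "c \<in> Obj C" then show "Fa (k c) \<in> hom D (Fo c) d" "is_iso D (Fa (k c))" using Fk iso by auto
  next
    fix f assume fA: "f \<in> Arr C"
    define x y where "x = Dom C f" and "y = Cod C f"
    have fh: "f \<in> hom C x y" using fA unfolding hom_def x_def y_def by auto
    have xO: "x \<in> Obj C" and yO: "y \<in> Obj C" using cat_obj[OF assms(1) fh] by auto
    have "Comp D (Id D d) (Fa (k x)) = Fa (k x)" using cat_idl[OF assms(4) Fk[OF xO]] .
    also have "\<dots> = Fa (Comp C (k y) f)"
      using par[OF k[OF xO] cat_comp[OF assms(1) fh k[OF yO]]] .
    also have "\<dots> = Comp D (Fa (k y)) (Fa f)" using fun_comp[OF assms(6) fh k[OF yO]] .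
    finally show "Comp D (Id D d) (Fa (k (Dom C f))) = Comp D (Fa (k (Cod C f))) (Fa f)"
      unfolding x_def y_def .
  qed
  then show ?thesis using dO by blast
qed

end
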